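(* Let $X=(X_i)_{i\ge1}$ and $Y=(Y_j)_{j\ge1}$ be real-valued partially exchangeable sequences, so that there exist random probability measures $(\tilde p_1,\tilde p_2)$ on $\mathbb{R}$ such that, conditionally on $(\tilde p_1,\tilde p_2)$, all $X_i$ and $Y_j$ are independent with $X_i\sim\tilde p_1$ and $Y_j\sim\tilde p_2$. Assume that $\tilde p_1$ and $\tilde p_2$ have the same marginal distribution and that $X_1$ has finite, strictly positive variance. Then for all $i\neq i'$ and all $j$, $$-\operatorname{corr}(X_i,X_{i'})\le \operatorname{corr}(X_i,Y_j)\le \operatorname{corr}(X_i,X_{i'}).$$
   Context: Partial exchangeability of $X$ and $Y$ means that for all $n,m$ and all permutations $\pi_1$ of $\{1,\dots,n\}$ and $\pi_2$ of $\{1,\dots,m\}$, $((X_i)_{i=1}^n,(Y_j)_{j=1}^m)$ and $((X_{\pi_1(i)})_{i=1}^n,(Y_{\pi_2(j)})_{j=1}^m)$ have the same distribution; by de Finetti's theorem this is equivalent to the conditional i.i.d. representation in the claim. *)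

theory Defs
  imports "HOL-Probability.Probability"
begin

definition covariance :: "'a measure \<Rightarrow> ('a \<Rightarrow> real) \<Rightarrow> ('a \<Rightarrow> real) \<Rightarrow> real" where
  "covariance M U V =
     integral\<^sup>L M (\<lambda>w. (U w - integral\<^sup>L M U) * (V w - integral\<^sup>L M V))"

definition var :: "'a measure \<Rightarrow> ('a \<Rightarrow> real) \<Rightarrow> real" where
  "var M U = integral\<^sup>L M (\<lambda>w. (U w - integral\<^sup>L M U)\<^sup>2)"

definition corr :: "'a measure \<Rightarrow> ('a \<Rightarrow> real) \<Rightarrow> ('a \<Rightarrow> real) \<Rightarrow> real" where
  "corr M U V = covariance M U V / (sqrt (var M U) * sqrt (var M V))"

end

theory Submission
  imports Defs
begin

lemma PiM_two:
  fixes p :: "real measure"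
  assumes p: "prob_space p" "sets p = sets borel" and K: "finite K" "i \<in> K" "i' \<in> K" "i \<noteq> i'"
    and h[measurable]: "case_prod h \<in> borel_measurable (borel \<Otimes>\<^sub>M borel)"
  shows "(\<integral>\<^sup>+x. h (x i) (x i') \<partial>PiM K (\<lambda>_. p)) = (\<integral>\<^sup>+a. \<integral>\<^sup>+b. h a b \<partial>p \<partial>p)"
proof -
  interpret product_prob_space "\<lambda>_. p" K
    using p by (simp add: product_prob_space_def product_prob_space_axioms_def
        product_sigma_finite_def prob_space_imp_sigma_finite)
  interpret pp: pair_sigma_finite p p
    by (simp add: pair_sigma_finite_def prob_space_imp_sigma_finite p)
  have hm: "case_prod h \<in> borel_measurable (p \<Otimes>\<^sub>M p)"
    using h by (simp add: measurable_cong_sets[OF sets_pair_measure_cong[OF p(2) p(2)] refl])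
  have sub: "{i, i'} \<subseteq> K" using K by auto
  have "(\<integral>\<^sup>+x. h (x i) (x i') \<partial>PiM K (\<lambda>_. p))
      = (\<integral>\<^sup>+x. h (restrict x {i,i'} i) (restrict x {i,i'} i') \<partial>PiM K (\<lambda>_. p))"
    by simp
  also have "\<dots> = (\<integral>\<^sup>+\<sigma>. h (\<sigma> i) (\<sigma> i') \<partial>PiM {i,i'} (\<lambda>_. p))"
    apply (subst distr_restrict[OF sub K(1)])
    apply (subst nn_integral_distr)
      apply (rule measurable_restrict_subset[OF sub])
    using hm apply measurable
    done
  also have "\<dots> = (\<integral>\<^sup>+z. h (fst z) (snd z) \<partial>(p \<Otimes>\<^sub>M p))"
    by (rule product_nn_integral_pair[OF hm K(4)])
  also have "\<dots> = (\<integral>\<^sup>+a. \<integral>\<^sup>+b. h a b \<partial>p \<partial>p)"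
    by (subst sigma_finite_measure.nn_integral_fst[OF prob_space_imp_sigma_finite[OF p(1)], symmetric]) (use hm in simp_all)
  finally show ?thesis .
qed

lemma PiM_one:
  fixes p :: "real measure"
  assumes p: "prob_space p" "sets p = sets borel" and K: "finite K" "j \<in> K"
    and h[measurable]: "h \<in> borel_measurable borel"
  shows "(\<integral>\<^sup>+x. h (x j) \<partial>PiM K (\<lambda>_. p)) = (\<integral>\<^sup>+a. h a \<partial>p)"
proof -
  interpret product_prob_space "\<lambda>_. p" K
    using p by (simp add: product_prob_space_def product_prob_space_axioms_def
        product_sigma_finite_def prob_space_imp_sigma_finite)
  have hm: "h \<in> borel_measurable p"
    using h by (simp add: measurable_cong_sets[OF p(2) refl])
  have sub: "{j} \<subseteq> K" using K by auto
  have "(\<integral>\<^sup>+x. h (x j) \<partial>PiM K (\<lambda>_. p))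
      = (\<integral>\<^sup>+x. h (restrict x {j} j) \<partial>PiM K (\<lambda>_. p))"
    by simp
  also have "\<dots> = (\<integral>\<^sup>+\<sigma>. h (\<sigma> j) \<partial>PiM {j} (\<lambda>_. p))"
    apply (subst distr_restrict[OF sub K(1)])
    apply (subst nn_integral_distr)
      apply (rule measurable_restrict_subset[OF sub])
    using hm apply measurable
    done
  also have "\<dots> = (\<integral>\<^sup>+a. h a \<partial>p)"
    by (rule product_nn_integral_singleton[OF hm])
  finally show ?thesis .
qed

lemma measurable_PiM_prob:
  assumes I: "finite I"
  shows "(\<lambda>p. PiM I (\<lambda>_. p)) \<in> prob_algebra N \<rightarrow>\<^sub>M prob_algebra (PiM I (\<lambda>_. N))"
proof (rule measurable_prob_algebra_generated[OF sets_PiM Int_stable_prod_algebra prod_algebra_sets_into_space])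
  fix a assume a: "a \<in> space (prob_algebra N)"
  then show "prob_space (PiM I (\<lambda>_. a))"
    by (intro prob_space_PiM) (auto simp: space_prob_algebra)
  show "sets (PiM I (\<lambda>_. a)) = sets (PiM I (\<lambda>_. N))"
    using a by (intro sets_PiM_cong) (auto simp: space_prob_algebra)
next
  fix A assume "A \<in> prod_algebra I (\<lambda>_. N)"
  then obtain E where A: "A = Pi\<^sub>E I E" and E: "E \<in> (\<Pi> i\<in>I. sets N)"
    by (rule prod_algebraE_all)
  have "(\<lambda>a. \<Prod>i\<in>I. emeasure a (E i)) \<in> borel_measurable (prob_algebra N)"
    using E
    by (intro borel_measurable_prod_ennreal measurable_comp[OF measurable_prob_algebraD[OF measurable_ident_sets[OF refl]] measurable_emeasure_subprob_algebra, unfolded comp_def id_def])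
       auto
  then show "(\<lambda>a. emeasure (PiM I (\<lambda>_. a)) A) \<in> borel_measurable (prob_algebra N)"
  proof (rule measurable_cong[THEN iffD1, rotated])
    fix a assume a: "a \<in> space (prob_algebra N)"
    interpret product_prob_space "\<lambda>_. a" I
      using a by (simp add: space_prob_algebra product_prob_space_def product_prob_space_axioms_def
        product_sigma_finite_def prob_space_imp_sigma_finite)
    show "(\<Prod>i\<in>I. emeasure a (E i)) = emeasure (PiM I (\<lambda>_. a)) A"
      unfolding A using E a I by (subst emeasure_PiM) (auto simp: space_prob_algebra)
  qed
qed

lemma core:
  fixes M :: "'a measure"
    and X Y :: "nat \<Rightarrow> 'a \<Rightarrow> real"
    and P1 P2 :: "'a \<Rightarrow> real measure"
  assumes "prob_space M"
    and X_meas[measurable]: "\<And>i. X i \<in> borel_measurable M"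
    and Y_meas[measurable]: "\<And>j. Y j \<in> borel_measurable M"
    and P1_meas[measurable]: "P1 \<in> measurable M (prob_algebra borel)"
    and P2_meas[measurable]: "P2 \<in> measurable M (prob_algebra borel)"
    and cond_iid: "\<And>n::nat.
      distr M ((prob_algebra borel \<Otimes>\<^sub>M prob_algebra borel) \<Otimes>\<^sub>M
               (PiM {1..n} (\<lambda>_. borel) \<Otimes>\<^sub>M PiM {1..n} (\<lambda>_. borel)))
        (\<lambda>w. ((P1 w, P2 w), (\<lambda>i\<in>{1..n}. X i w, \<lambda>j\<in>{1..n}. Y j w)))
      = distr M (prob_algebra borel \<Otimes>\<^sub>M prob_algebra borel) (\<lambda>w. (P1 w, P2 w)) \<bind>
          (\<lambda>(p, q). return (prob_algebra borel \<Otimes>\<^sub>M prob_algebra borel) (p, q) \<Otimes>\<^sub>M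
                      (PiM {1..n} (\<lambda>_. p) \<Otimes>\<^sub>M PiM {1..n} (\<lambda>_. q)))"
    and ij: "i \<ge> 1" "i' \<ge> 1" "i \<noteq> i'" "j \<ge> 1"
  shows "(\<integral>\<^sup>+w. ennreal ((a * X i w + b * X i' w + c * Y j w + d)\<^sup>2) \<partial>M)
       = (\<integral>\<^sup>+w. \<integral>\<^sup>+x. \<integral>\<^sup>+x'. \<integral>\<^sup>+y. ennreal ((a * x + b * x' + c * y + d)\<^sup>2) \<partial>P2 w \<partial>P1 w \<partial>P1 w \<partial>M)"
proof -
  define n where "n = max i (max i' j)"
  define I where "I = {1..n}"
  define PA where "PA = (prob_algebra borel :: real measure measure)"
  define Q where "Q = PA \<Otimes>\<^sub>M PA"
  define R where "R = (PiM I (\<lambda>_. borel) :: (nat \<Rightarrow> real) measure)"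
  define \<Omega> where "\<Omega> = Q \<Otimes>\<^sub>M (R \<Otimes>\<^sub>M R)"
  define J where "J = (\<lambda>w. ((P1 w, P2 w), (\<lambda>i\<in>I. X i w, \<lambda>j\<in>I. Y j w)))"
  define F where "F = (\<lambda>z::(real measure \<times> real measure) \<times> (nat \<Rightarrow> real) \<times> (nat \<Rightarrow> real).
     ennreal ((a * fst (snd z) i + b * fst (snd z) i' + c * snd (snd z) j + d)\<^sup>2))"
  define K where "K = (\<lambda>z::real measure \<times> real measure. return Q z \<Otimes>\<^sub>M (PiM I (\<lambda>_. fst z) \<Otimes>\<^sub>M PiM I (\<lambda>_. snd z)))"
  define N where "N = distr M Q (\<lambda>w. (P1 w, P2 w))"
  have iI: "i \<in> I" "i' \<in> I" "j \<in> I" using ij by (auto simp: I_def n_def)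
  have finI: "finite I" by (simp add: I_def)
  have J_meas: "J \<in> M \<rightarrow>\<^sub>M \<Omega>"
    unfolding J_def \<Omega>_def Q_def R_def PA_def by measurable
  have F_meas: "F \<in> borel_measurable \<Omega>"
    unfolding F_def \<Omega>_def R_def using iI by measurable
  have PiM_meas: "(\<lambda>p. PiM I (\<lambda>_. p)) \<in> PA \<rightarrow>\<^sub>M prob_algebra R"
    unfolding PA_def R_def by (rule measurable_PiM_prob[OF finI])
  have K_meas: "K \<in> Q \<rightarrow>\<^sub>M subprob_algebra \<Omega>"
    unfolding K_def \<Omega>_def
    apply (rule measurable_prob_algebraD)
    apply (rule measurable_pair_prob[OF measurable_return_prob_space])
    apply (rule measurable_pair_prob)
     apply (rule measurable_compose[OF _ PiM_meas]) apply (simp add: Q_def)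
    apply (rule measurable_compose[OF _ PiM_meas]) apply (simp add: Q_def)
    done
  have eq: "distr M \<Omega> J = N \<bind> K"
    using cond_iid[of n] unfolding \<Omega>_def Q_def R_def PA_def J_def N_def K_def I_def
    by (simp add: case_prod_beta')
  have "(\<integral>\<^sup>+w. ennreal ((a * X i w + b * X i' w + c * Y j w + d)\<^sup>2) \<partial>M) = (\<integral>\<^sup>+w. F (J w) \<partial>M)"
    using iI by (simp add: F_def J_def)
  also have "\<dots> = (\<integral>\<^sup>+z. F z \<partial>distr M \<Omega> J)"
    by (rule nn_integral_distr[symmetric]) (simp_all add: J_meas F_meas cong: measurable_cong_sets)
  also have "\<dots> = (\<integral>\<^sup>+pq. \<integral>\<^sup>+z. F z \<partial>K pq \<partial>N)"
    unfolding eq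
    by (rule nn_integral_bind[OF F_meas]) (simp add: N_def K_meas cong: measurable_cong_sets)
  also have "\<dots> = (\<integral>\<^sup>+w. \<integral>\<^sup>+z. F z \<partial>K (P1 w, P2 w) \<partial>M)"
    unfolding N_def
    by (rule nn_integral_distr)
       (use measurable_compose[OF K_meas nn_integral_measurable_subprob_algebra[OF F_meas]] in \<open>auto simp: Q_def PA_def\<close>)
  also have "\<dots> = (\<integral>\<^sup>+w. \<integral>\<^sup>+x. \<integral>\<^sup>+x'. \<integral>\<^sup>+y. ennreal ((a * x + b * x' + c * y + d)\<^sup>2) \<partial>P2 w \<partial>P1 w \<partial>P1 w \<partial>M)"
  proof (rule nn_integral_cong)
    fix w assume w: "w \<in> space M"
    define p where "p = P1 w"
    define q where "q = P2 w"
    have p: "prob_space p" "sets p = sets borel"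
      using measurable_space[OF P1_meas w] by (auto simp: p_def space_prob_algebra)
    have q: "prob_space q" "sets q = sets borel"
      using measurable_space[OF P2_meas w] by (auto simp: q_def space_prob_algebra)
    have pqQ: "(p, q) \<in> space Q"
      using measurable_space[OF P1_meas w] measurable_space[OF P2_meas w]
      by (simp add: p_def q_def Q_def PA_def space_pair_measure)
    have PP: "prob_space (PiM I (\<lambda>_. p) \<Otimes>\<^sub>M PiM I (\<lambda>_. q))"
      by (intro prob_space_pair prob_space_PiM p q)
    have PQ: "prob_space (PiM I (\<lambda>_. q))"
      by (intro prob_space_PiM q)
    have setsB: "sets (PiM I (\<lambda>_. p) \<Otimes>\<^sub>M PiM I (\<lambda>_. q)) = sets (R \<Otimes>\<^sub>M R)"
      unfolding R_def by (intro sets_pair_measure_cong sets_PiM_cong) (auto simp: p q)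
    show "(\<integral>\<^sup>+z. F z \<partial>K (P1 w, P2 w)) = (\<integral>\<^sup>+x. \<integral>\<^sup>+x'. \<integral>\<^sup>+y. ennreal ((a * x + b * x' + c * y + d)\<^sup>2) \<partial>P2 w \<partial>P1 w \<partial>P1 w)"
    proof -
      define B where "B = PiM I (\<lambda>_. p) \<Otimes>\<^sub>M PiM I (\<lambda>_. q)"
      define F0 where "F0 = (\<lambda>z::(nat \<Rightarrow> real) \<times> (nat \<Rightarrow> real).
         ennreal ((a * fst z i + b * fst z i' + c * snd z j + d)\<^sup>2))"
      have Bsf: "sigma_finite_measure B" unfolding B_def by (rule prob_space_imp_sigma_finite[OF PP])
      have retsets: "sets (return Q (p, q) \<Otimes>\<^sub>M B) = sets \<Omega>"
        unfolding \<Omega>_def B_def by (rule sets_pair_measure_cong[OF sets_return setsB])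
      have F0m: "F0 \<in> borel_measurable (R \<Otimes>\<^sub>M R)"
        unfolding F0_def R_def using iI by measurable
      have F0mB: "F0 \<in> borel_measurable B"
        using F0m setsB by (simp add: B_def cong: measurable_cong_sets)
      have "(\<integral>\<^sup>+z. F z \<partial>K (P1 w, P2 w)) = (\<integral>\<^sup>+z. F z \<partial>(return Q (p, q) \<Otimes>\<^sub>M B))"
        by (simp add: K_def B_def p_def q_def)
      also have "\<dots> = (\<integral>\<^sup>+x. \<integral>\<^sup>+y. F (x, y) \<partial>B \<partial>return Q (p, q))"
        by (rule sigma_finite_measure.nn_integral_fst[OF Bsf, symmetric])
           (use F_meas retsets in \<open>simp cong: measurable_cong_sets\<close>)
      also have "\<dots> = (\<integral>\<^sup>+x. (\<integral>\<^sup>+y. F0 y \<partial>B) \<partial>return Q (p, q))"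
        by (simp add: F_def F0_def)
      also have "\<dots> = (\<integral>\<^sup>+y. F0 y \<partial>B)"
        using prob_space.emeasure_space_1[OF prob_space_return[OF pqQ]] by simp
      also have "\<dots> = (\<integral>\<^sup>+x. \<integral>\<^sup>+y. F0 (x, y) \<partial>PiM I (\<lambda>_. q) \<partial>PiM I (\<lambda>_. p))"
        unfolding B_def
        by (rule sigma_finite_measure.nn_integral_fst[OF prob_space_imp_sigma_finite[OF PQ], symmetric])
           (use F0mB in \<open>simp add: B_def\<close>)
      also have "\<dots> = (\<integral>\<^sup>+x. (\<lambda>u v. \<integral>\<^sup>+t. ennreal ((a * u + b * v + c * t + d)\<^sup>2) \<partial>q) (x i) (x i') \<partial>PiM I (\<lambda>_. p))"
      proof (rule nn_integral_cong)
        fix x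
        show "(\<integral>\<^sup>+y. F0 (x, y) \<partial>PiM I (\<lambda>_. q)) = (\<lambda>u v. \<integral>\<^sup>+t. ennreal ((a * u + b * v + c * t + d)\<^sup>2) \<partial>q) (x i) (x i')"
          unfolding F0_def by (simp, rule PiM_one[OF q finI iI(3)]) measurable
      qed
      also have "\<dots> = (\<integral>\<^sup>+u. \<integral>\<^sup>+v. \<integral>\<^sup>+t. ennreal ((a * u + b * v + c * t + d)\<^sup>2) \<partial>q \<partial>p \<partial>p)"
      proof (rule PiM_two[OF p finI iI(1,2) ij(3)])
        have "(\<lambda>uv. \<integral>\<^sup>+t. ennreal ((a * fst uv + b * snd uv + c * t + d)\<^sup>2) \<partial>q) \<in> borel_measurable (borel \<Otimes>\<^sub>M borel)"
        proof (rule sigma_finite_measure.borel_measurable_nn_integral[OF prob_space_imp_sigma_finite[OF q(1)]])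
          have "(\<lambda>z::(real \<times> real) \<times> real. ennreal ((a * fst (fst z) + b * snd (fst z) + c * snd z + d)\<^sup>2)) \<in> borel_measurable ((borel \<Otimes>\<^sub>M borel) \<Otimes>\<^sub>M borel)"
            by measurable
          then show "(\<lambda>(uv, t). ennreal ((a * fst uv + b * snd uv + c * t + d)\<^sup>2)) \<in> borel_measurable ((borel \<Otimes>\<^sub>M borel) \<Otimes>\<^sub>M q)"
            by (simp add: case_prod_beta' measurable_cong_sets[OF sets_pair_measure_cong[OF refl q(2)] refl])
        qed
        then show "(\<lambda>(u, v). \<integral>\<^sup>+t. ennreal ((a * u + b * v + c * t + d)\<^sup>2) \<partial>q) \<in> borel_measurable (borel \<Otimes>\<^sub>M borel)"
          by (simp add: case_prod_beta')
      qed
      finally show ?thesis by (simp add: p_def q_def)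
    qed
  qed
  finally show ?thesis .
qed

lemma mom_basic:
  fixes p :: "real measure"
  assumes p: "prob_space p" "sets p = sets borel" and sq: "integrable p (\<lambda>x. x\<^sup>2)"
  shows "integrable p (\<lambda>x. x)" "(\<integral>x. x \<partial>p)\<^sup>2 \<le> (\<integral>x. x\<^sup>2 \<partial>p)"
proof -
  interpret prob_space p by fact
  have [measurable]: "(\<lambda>x. x) \<in> borel_measurable p" by (simp add: measurable_cong_sets[OF p(2) refl])
  show int1: "integrable p (\<lambda>x. x)"
    by (rule square_integrable_imp_integrable) (auto simp: sq)
  define m where "m = (\<integral>x. x \<partial>p)"
  have "0 \<le> (\<integral>x. (x - m)\<^sup>2 \<partial>p)" by simp
  also have "(\<lambda>x. (x - m)\<^sup>2) = (\<lambda>x. x\<^sup>2 + (- 2 * m) * x + m\<^sup>2)"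
    by (auto simp: power2_eq_square algebra_simps)
  also have "(\<integral>x. x\<^sup>2 + (- 2 * m) * x + m\<^sup>2 \<partial>p) = (\<integral>x. x\<^sup>2 \<partial>p) - 2 * m * m + m\<^sup>2"
    using int1 sq prob_space by (simp add: m_def)
  finally show "(\<integral>x. x \<partial>p)\<^sup>2 \<le> (\<integral>x. x\<^sup>2 \<partial>p)" by (simp add: m_def power2_eq_square)
qed

lemma L1:
  fixes p :: "real measure"
  assumes p: "prob_space p" "sets p = sets borel" and sq: "integrable p (\<lambda>x. x\<^sup>2)"
    and nn: "\<And>x. 0 \<le> \<alpha> + \<beta> * x + \<gamma> * x\<^sup>2"
  shows "(\<integral>\<^sup>+x. ennreal (\<alpha> + \<beta> * x + \<gamma> * x\<^sup>2) \<partial>p) = ennreal (\<alpha> + \<beta> * (\<integral>x. x \<partial>p) + \<gamma> * (\<integral>x. x\<^sup>2 \<partial>p))"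
proof -
  interpret prob_space p by fact
  have [measurable]: "(\<lambda>x. x) \<in> borel_measurable p" by (simp add: measurable_cong_sets[OF p(2) refl])
  have int1: "integrable p (\<lambda>x. x)" by (rule mom_basic[OF p sq])
  have intf: "integrable p (\<lambda>x. \<alpha> + \<beta> * x + \<gamma> * x\<^sup>2)"
    using int1 sq by simp
  have "(\<integral>\<^sup>+x. ennreal (\<alpha> + \<beta> * x + \<gamma> * x\<^sup>2) \<partial>p) = ennreal (\<integral>x. \<alpha> + \<beta> * x + \<gamma> * x\<^sup>2 \<partial>p)"
    by (rule nn_integral_eq_integral[OF intf]) (simp add: nn)
  also have "(\<integral>x. \<alpha> + \<beta> * x + \<gamma> * x\<^sup>2 \<partial>p) = \<alpha> + \<beta> * (\<integral>x. x \<partial>p) + \<gamma> * (\<integral>x. x\<^sup>2 \<partial>p)"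
    using int1 sq prob_space by simp
  finally show ?thesis .
qed

definition poly :: "real \<Rightarrow> real \<Rightarrow> real \<Rightarrow> real \<Rightarrow> real \<Rightarrow> real \<Rightarrow> real \<Rightarrow> real \<Rightarrow> real" where
  "poly a b c d mp sp mq sq = a\<^sup>2 * sp + b\<^sup>2 * sp + c\<^sup>2 * sq + d\<^sup>2 + 2*a*b * mp\<^sup>2 + 2*a*c * mp * mq
     + 2*a*d * mp + 2*b*c * mp * mq + 2*b*d * mp + 2*c*d * mq"

lemma poly_nonneg:
  assumes "mp\<^sup>2 \<le> sp" "mq\<^sup>2 \<le> sq"
  shows "0 \<le> poly a b c d mp sp mq sq"
proof -
  have "poly a b c d mp sp mq sq = (a*mp + b*mp + c*mq + d)\<^sup>2 + (a\<^sup>2 + b\<^sup>2) * (sp - mp\<^sup>2) + c\<^sup>2 * (sq - mq\<^sup>2)"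
    by (simp add: poly_def power2_eq_square algebra_simps)
  also have "0 \<le> \<dots>" using assms by (intro add_nonneg_nonneg mult_nonneg_nonneg) auto
  finally show ?thesis by simp
qed

lemma T:
  fixes p q :: "real measure"
  assumes p: "prob_space p" "sets p = sets borel" and sp: "integrable p (\<lambda>x. x\<^sup>2)"
  assumes q: "prob_space q" "sets q = sets borel" and sq: "integrable q (\<lambda>x. x\<^sup>2)"
  shows "(\<integral>\<^sup>+x. \<integral>\<^sup>+x'. \<integral>\<^sup>+y. ennreal ((a * x + b * x' + c * y + d)\<^sup>2) \<partial>q \<partial>p \<partial>p)
     = ennreal (poly a b c d (\<integral>x. x \<partial>p) (\<integral>x. x\<^sup>2 \<partial>p) (\<integral>x. x \<partial>q) (\<integral>x. x\<^sup>2 \<partial>q))"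
proof -
  define mp where "mp = (\<integral>x. x \<partial>p)"
  define Sp where "Sp = (\<integral>x. x\<^sup>2 \<partial>p)"
  define mq where "mq = (\<integral>x. x \<partial>q)"
  define Sq where "Sq = (\<integral>x. x\<^sup>2 \<partial>q)"
  have hp: "mp\<^sup>2 \<le> Sp" unfolding mp_def Sp_def by (rule mom_basic[OF p sp])
  have hq: "mq\<^sup>2 \<le> Sq" unfolding mq_def Sq_def by (rule mom_basic[OF q sq])
  have inner: "(\<integral>\<^sup>+y. ennreal ((a * x + b * x' + c * y + d)\<^sup>2) \<partial>q)
      = ennreal ((a*x+b*x'+d)\<^sup>2 + 2*c*(a*x+b*x'+d) * mq + c\<^sup>2 * Sq)" for x x'
  proof -
    have "(\<integral>\<^sup>+y. ennreal ((a * x + b * x' + c * y + d)\<^sup>2) \<partial>q)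
       = (\<integral>\<^sup>+y. ennreal ((a*x+b*x'+d)\<^sup>2 + (2*c*(a*x+b*x'+d)) * y + c\<^sup>2 * y\<^sup>2) \<partial>q)"
      by (intro nn_integral_cong arg_cong[where f=ennreal]) (simp add: power2_eq_square algebra_simps)
    also have "\<dots> = ennreal ((a*x+b*x'+d)\<^sup>2 + (2*c*(a*x+b*x'+d)) * mq + c\<^sup>2 * Sq)"
    proof (rule L1[OF q sq, folded mq_def Sq_def])
      fix y
      have "(a*x+b*x'+d)\<^sup>2 + (2*c*(a*x+b*x'+d)) * y + c\<^sup>2 * y\<^sup>2 = (c*y + (a*x+b*x'+d))\<^sup>2"
        by (simp add: power2_eq_square algebra_simps)
      then show "0 \<le> (a*x+b*x'+d)\<^sup>2 + (2*c*(a*x+b*x'+d)) * y + c\<^sup>2 * y\<^sup>2" by simp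
    qed
    finally show ?thesis by simp
  qed
  have middle: "(\<integral>\<^sup>+x'. ennreal ((a*x+b*x'+d)\<^sup>2 + 2*c*(a*x+b*x'+d) * mq + c\<^sup>2 * Sq) \<partial>p)
      = ennreal ((a*x+d)\<^sup>2 + 2*c*(a*x+d)*mq + c\<^sup>2*Sq + (2*b*(a*x+d) + 2*c*b*mq) * mp + b\<^sup>2 * Sp)" for x
  proof -
    have "(\<integral>\<^sup>+x'. ennreal ((a*x+b*x'+d)\<^sup>2 + 2*c*(a*x+b*x'+d) * mq + c\<^sup>2 * Sq) \<partial>p)
      = (\<integral>\<^sup>+x'. ennreal (((a*x+d)\<^sup>2 + 2*c*(a*x+d)*mq + c\<^sup>2*Sq) + (2*b*(a*x+d) + 2*c*b*mq) * x' + b\<^sup>2 * x'\<^sup>2) \<partial>p)"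
      by (intro nn_integral_cong arg_cong[where f=ennreal]) (simp add: power2_eq_square algebra_simps)
    also have "\<dots> = ennreal (((a*x+d)\<^sup>2 + 2*c*(a*x+d)*mq + c\<^sup>2*Sq) + (2*b*(a*x+d) + 2*c*b*mq) * mp + b\<^sup>2 * Sp)"
    proof (rule L1[OF p sp, folded mp_def Sp_def])
      fix x'
      have "((a*x+d)\<^sup>2 + 2*c*(a*x+d)*mq + c\<^sup>2*Sq) + (2*b*(a*x+d) + 2*c*b*mq) * x' + b\<^sup>2 * x'\<^sup>2
          = (b*x' + (a*x+d) + c*mq)\<^sup>2 + c\<^sup>2 * (Sq - mq\<^sup>2)"
        by (simp add: power2_eq_square algebra_simps)
      also have "0 \<le> \<dots>" using hq by (intro add_nonneg_nonneg mult_nonneg_nonneg) auto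
      finally show "0 \<le> ((a*x+d)\<^sup>2 + 2*c*(a*x+d)*mq + c\<^sup>2*Sq) + (2*b*(a*x+d) + 2*c*b*mq) * x' + b\<^sup>2 * x'\<^sup>2" .
    qed
    finally show ?thesis by simp
  qed
  have outer: "(\<integral>\<^sup>+x. ennreal ((a*x+d)\<^sup>2 + 2*c*(a*x+d)*mq + c\<^sup>2*Sq + (2*b*(a*x+d) + 2*c*b*mq) * mp + b\<^sup>2 * Sp) \<partial>p)
      = ennreal (poly a b c d mp Sp mq Sq)"
  proof -
    have "(\<integral>\<^sup>+x. ennreal ((a*x+d)\<^sup>2 + 2*c*(a*x+d)*mq + c\<^sup>2*Sq + (2*b*(a*x+d) + 2*c*b*mq) * mp + b\<^sup>2 * Sp) \<partial>p)
      = (\<integral>\<^sup>+x. ennreal ((d\<^sup>2 + 2*c*d*mq + c\<^sup>2*Sq + 2*b*d*mp + 2*b*c*mp*mq + b\<^sup>2*Sp) + (2*a*d + 2*a*c*mq + 2*a*b*mp) * x + a\<^sup>2 * x\<^sup>2) \<partial>p)"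
      by (intro nn_integral_cong arg_cong[where f=ennreal]) (simp add: power2_eq_square algebra_simps)
    also have "\<dots> = ennreal ((d\<^sup>2 + 2*c*d*mq + c\<^sup>2*Sq + 2*b*d*mp + 2*b*c*mp*mq + b\<^sup>2*Sp) + (2*a*d + 2*a*c*mq + 2*a*b*mp) * mp + a\<^sup>2 * Sp)"
    proof (rule L1[OF p sp, folded mp_def Sp_def])
      fix x
      have "(d\<^sup>2 + 2*c*d*mq + c\<^sup>2*Sq + 2*b*d*mp + 2*b*c*mp*mq + b\<^sup>2*Sp) + (2*a*d + 2*a*c*mq + 2*a*b*mp) * x + a\<^sup>2 * x\<^sup>2
          = (a*x + d + c*mq + b*mp)\<^sup>2 + c\<^sup>2 * (Sq - mq\<^sup>2) + b\<^sup>2 * (Sp - mp\<^sup>2)"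
        by (simp add: power2_eq_square algebra_simps)
      also have "0 \<le> \<dots>" using hq hp by (intro add_nonneg_nonneg mult_nonneg_nonneg) auto
      finally show "0 \<le> (d\<^sup>2 + 2*c*d*mq + c\<^sup>2*Sq + 2*b*d*mp + 2*b*c*mp*mq + b\<^sup>2*Sp) + (2*a*d + 2*a*c*mq + 2*a*b*mp) * x + a\<^sup>2 * x\<^sup>2" .
    qed
    also have "\<dots> = ennreal (poly a b c d mp Sp mq Sq)"
      by (simp add: poly_def power2_eq_square algebra_simps)
    finally show ?thesis .
  qed
  show ?thesis
    by (simp add: inner middle outer flip: mp_def Sp_def mq_def Sq_def)
qed

theorem proposition1:
  fixes M :: "'a measure"
    and X Y :: "nat \<Rightarrow> 'a \<Rightarrow> real"
    and P1 P2 :: "'a \<Rightarrow> real measure"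
  assumes "prob_space M"
    and X_meas: "\<And>i. X i \<in> borel_measurable M"
    and Y_meas: "\<And>j. Y j \<in> borel_measurable M"
    and P1_meas: "P1 \<in> measurable M (prob_algebra borel)"
    and P2_meas: "P2 \<in> measurable M (prob_algebra borel)"
    and cond_iid: "\<And>n::nat.
      distr M ((prob_algebra borel \<Otimes>\<^sub>M prob_algebra borel) \<Otimes>\<^sub>M
               (PiM {1..n} (\<lambda>_. borel) \<Otimes>\<^sub>M PiM {1..n} (\<lambda>_. borel)))
        (\<lambda>w. ((P1 w, P2 w), (\<lambda>i\<in>{1..n}. X i w, \<lambda>j\<in>{1..n}. Y j w)))
      = distr M (prob_algebra borel \<Otimes>\<^sub>M prob_algebra borel) (\<lambda>w. (P1 w, P2 w)) \<bind>
          (\<lambda>(p, q). return (prob_algebra borel \<Otimes>\<^sub>M prob_algebra borel) (p, q) \<Otimes>\<^sub>M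
                      (PiM {1..n} (\<lambda>_. p) \<Otimes>\<^sub>M PiM {1..n} (\<lambda>_. q)))"
    and same_marginal: "distr M (prob_algebra borel) P1 = distr M (prob_algebra borel) P2"
    and finite_var: "integrable M (\<lambda>w. (X 1 w)\<^sup>2)"
    and pos_var: "var M (X 1) > 0"
    and "i \<ge> 1" and "i' \<ge> 1" and "i \<noteq> i'" and "j \<ge> 1"
  shows "- corr M (X i) (X i') \<le> corr M (X i) (Y j)
         \<and> corr M (X i) (Y j) \<le> corr M (X i) (X i')"
proof -
  interpret M: prob_space M by fact
  note [measurable] = X_meas Y_meas P1_meas P2_meas
  note core' = core[OF assms(1) X_meas Y_meas P1_meas P2_meas cond_iid]
  have Pw: "prob_space (P1 w) \<and> sets (P1 w) = sets borel \<and> prob_space (P2 w) \<and> sets (P2 w) = sets borel"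
    if "w \<in> space M" for w
    using measurable_space[OF P1_meas that] measurable_space[OF P2_meas that] by (auto simp: space_prob_algebra)
  have intm: "(\<lambda>p. \<integral>x. f x \<partial>p) \<in> borel_measurable (prob_algebra borel)" if f: "f \<in> borel_measurable borel" for f :: "real \<Rightarrow> real"
    by (rule measurable_compose[OF measurable_prob_algebraD[OF measurable_ident_sets[OF refl]] integral_measurable_subprob_algebra[OF f]])
  have nnm: "(\<lambda>p. \<integral>\<^sup>+x. f x \<partial>p) \<in> borel_measurable (prob_algebra borel)" if f: "f \<in> borel_measurable borel" for f :: "real \<Rightarrow> ennreal"
    by (rule measurable_compose[OF measurable_prob_algebraD[OF measurable_ident_sets[OF refl]] nn_integral_measurable_subprob_algebra[OF f]])
  have trn: "(\<integral>\<^sup>+w. g (P1 w) \<partial>M) = (\<integral>\<^sup>+w. g (P2 w) \<partial>M)" if g: "g \<in> borel_measurable (prob_algebra borel)" for g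
  proof -
    have "(\<integral>\<^sup>+w. g (P1 w) \<partial>M) = (\<integral>\<^sup>+x. g x \<partial>distr M (prob_algebra borel) P1)"
      by (rule nn_integral_distr[symmetric]) (use g in simp_all)
    also have "\<dots> = (\<integral>\<^sup>+w. g (P2 w) \<partial>M)" unfolding same_marginal
      by (rule nn_integral_distr) (use g in simp_all)
    finally show ?thesis .
  qed
  have trl: "(\<integral>w. g (P1 w) \<partial>M) = (\<integral>w. g (P2 w) \<partial>M)" if g: "g \<in> borel_measurable (prob_algebra borel)" for g :: "real measure \<Rightarrow> real"
  proof -
    have "(\<integral>w. g (P1 w) \<partial>M) = (\<integral>x. g x \<partial>distr M (prob_algebra borel) P1)"
      by (rule integral_distr[symmetric]) (use g in simp_all)
    also have "\<dots> = (\<integral>w. g (P2 w) \<partial>M)" unfolding same_marginal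
      by (rule integral_distr) (use g in simp_all)
    finally show ?thesis .
  qed
  define m1 where "m1 w = (\<integral>x. x \<partial>P1 w)" for w
  define s1 where "s1 w = (\<integral>x. x\<^sup>2 \<partial>P1 w)" for w
  define m2 where "m2 w = (\<integral>x. x \<partial>P2 w)" for w
  define s2 where "s2 w = (\<integral>x. x\<^sup>2 \<partial>P2 w)" for w
  have mm: "(\<lambda>p::real measure. \<integral>x. x \<partial>p) \<in> borel_measurable (prob_algebra borel)"
    "(\<lambda>p::real measure. \<integral>x. x\<^sup>2 \<partial>p) \<in> borel_measurable (prob_algebra borel)"
    "(\<lambda>p::real measure. \<integral>\<^sup>+x. ennreal (x\<^sup>2) \<partial>p) \<in> borel_measurable (prob_algebra borel)"
    using intm[of "\<lambda>x. x"] intm[of "\<lambda>x. x\<^sup>2"] nnm[of "\<lambda>x. ennreal (x\<^sup>2)"] by auto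
  have [measurable]: "m1 \<in> borel_measurable M" "s1 \<in> borel_measurable M" "m2 \<in> borel_measurable M" "s2 \<in> borel_measurable M"
    unfolding m1_def[abs_def] s1_def[abs_def] m2_def[abs_def] s2_def[abs_def]
    by (rule measurable_compose[OF P1_meas mm(1)] measurable_compose[OF P1_meas mm(2)]
        measurable_compose[OF P2_meas mm(1)] measurable_compose[OF P2_meas mm(2)])+
  have nnP1: "(\<lambda>w. \<integral>\<^sup>+x. ennreal (x\<^sup>2) \<partial>P1 w) \<in> borel_measurable M"
    "(\<lambda>w. \<integral>\<^sup>+x. ennreal (x\<^sup>2) \<partial>P2 w) \<in> borel_measurable M"
    by (rule measurable_compose[OF P1_meas mm(3)] measurable_compose[OF P2_meas mm(3)])+
  have sqX1: "(\<integral>\<^sup>+w. ennreal ((X 1 w)\<^sup>2) \<partial>M) = (\<integral>\<^sup>+w. \<integral>\<^sup>+x. ennreal (x\<^sup>2) \<partial>P1 w \<partial>M)"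
  proof -
    have "(\<integral>\<^sup>+w. ennreal ((X 1 w)\<^sup>2) \<partial>M) = (\<integral>\<^sup>+w. \<integral>\<^sup>+x. \<integral>\<^sup>+x'. \<integral>\<^sup>+y. ennreal ((1 * x + 0 * x' + 0 * y + 0)\<^sup>2) \<partial>P2 w \<partial>P1 w \<partial>P1 w \<partial>M)"
      using core'[of 1 2 1 1 0 0 0] by simp
    also have "\<dots> = (\<integral>\<^sup>+w. \<integral>\<^sup>+x. ennreal (x\<^sup>2) \<partial>P1 w \<partial>M)"
    proof (rule nn_integral_cong)
      fix w assume w: "w \<in> space M"
      then show "(\<integral>\<^sup>+x. \<integral>\<^sup>+x'. \<integral>\<^sup>+y. ennreal ((1 * x + 0 * x' + 0 * y + 0)\<^sup>2) \<partial>P2 w \<partial>P1 w \<partial>P1 w) = (\<integral>\<^sup>+x. ennreal (x\<^sup>2) \<partial>P1 w)"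
        using Pw[OF w] by (simp add: prob_space.emeasure_space_1)
    qed
    finally show ?thesis .
  qed
  have fin1: "(\<integral>\<^sup>+w. \<integral>\<^sup>+x. ennreal (x\<^sup>2) \<partial>P1 w \<partial>M) < \<infinity>"
    unfolding sqX1[symmetric] using nn_integral_eq_integral[OF finite_var] by simp
  have fin2: "(\<integral>\<^sup>+w. \<integral>\<^sup>+x. ennreal (x\<^sup>2) \<partial>P2 w \<partial>M) < \<infinity>"
    using fin1 trn[OF mm(3)] by simp
  have AEint1: "AE w in M. integrable (P1 w) (\<lambda>x. x\<^sup>2)"
  proof -
    have "AE w in M. (\<integral>\<^sup>+x. ennreal (x\<^sup>2) \<partial>P1 w) \<noteq> \<infinity>"
      by (rule nn_integral_PInf_AE[OF nnP1(1)]) (use fin1 in simp)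
    then show ?thesis using AE_space
    proof eventually_elim
      case (elim w)
      show ?case
      proof (rule integrableI_nonneg)
        have "sets (P1 w) = sets borel" using Pw[OF elim(2)] by simp
        then show "(\<lambda>x. x\<^sup>2) \<in> borel_measurable (P1 w)" by (simp cong: measurable_cong_sets)
        show "AE x in P1 w. 0 \<le> x\<^sup>2" by simp
        show "(\<integral>\<^sup>+x. ennreal (x\<^sup>2) \<partial>P1 w) < \<infinity>" using elim(1) by (simp add: less_top)
      qed
    qed
  qed
  have AEint2: "AE w in M. integrable (P2 w) (\<lambda>x. x\<^sup>2)"
  proof -
    have "AE w in M. (\<integral>\<^sup>+x. ennreal (x\<^sup>2) \<partial>P2 w) \<noteq> \<infinity>"
      by (rule nn_integral_PInf_AE[OF nnP1(2)]) (use fin2 in simp)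
    then show ?thesis using AE_space
    proof eventually_elim
      case (elim w)
      show ?case
      proof (rule integrableI_nonneg)
        have "sets (P2 w) = sets borel" using Pw[OF elim(2)] by simp
        then show "(\<lambda>x. x\<^sup>2) \<in> borel_measurable (P2 w)" by (simp cong: measurable_cong_sets)
        show "AE x in P2 w. 0 \<le> x\<^sup>2" by simp
        show "(\<integral>\<^sup>+x. ennreal (x\<^sup>2) \<partial>P2 w) < \<infinity>" using elim(1) by (simp add: less_top)
      qed
    qed
  qed
  have s1nn: "0 \<le> s1 w" for w unfolding s1_def by simp
  have s2nn: "0 \<le> s2 w" for w unfolding s2_def by simp
  have AEbd1: "AE w in M. (m1 w)\<^sup>2 \<le> s1 w"
    using AEint1 AE_space
  proof eventually_elim
    case (elim w) then show ?case
      unfolding m1_def s1_def using Pw[OF elim(2)] by (intro mom_basic) auto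
  qed
  have AEbd2: "AE w in M. (m2 w)\<^sup>2 \<le> s2 w"
    using AEint2 AE_space
  proof eventually_elim
    case (elim w) then show ?case
      unfolding m2_def s2_def using Pw[OF elim(2)] by (intro mom_basic) auto
  qed
  have ints1: "integrable M s1"
  proof (rule integrableI_nonneg)
    show "AE x in M. 0 \<le> s1 x" by (simp add: s1nn)
    have "(\<integral>\<^sup>+w. ennreal (s1 w) \<partial>M) = (\<integral>\<^sup>+w. \<integral>\<^sup>+x. ennreal (x\<^sup>2) \<partial>P1 w \<partial>M)"
    proof (rule nn_integral_cong_AE)
      show "AE w in M. ennreal (s1 w) = (\<integral>\<^sup>+x. ennreal (x\<^sup>2) \<partial>P1 w)"
        using AEint1 by eventually_elim (simp add: s1_def nn_integral_eq_integral)
    qed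
    then show "(\<integral>\<^sup>+w. ennreal (s1 w) \<partial>M) < \<infinity>" using fin1 by simp
  qed simp
  have ints2: "integrable M s2"
  proof (rule integrableI_nonneg)
    show "AE x in M. 0 \<le> s2 x" by (simp add: s2nn)
    have "(\<integral>\<^sup>+w. ennreal (s2 w) \<partial>M) = (\<integral>\<^sup>+w. \<integral>\<^sup>+x. ennreal (x\<^sup>2) \<partial>P2 w \<partial>M)"
    proof (rule nn_integral_cong_AE)
      show "AE w in M. ennreal (s2 w) = (\<integral>\<^sup>+x. ennreal (x\<^sup>2) \<partial>P2 w)"
        using AEint2 by eventually_elim (simp add: s2_def nn_integral_eq_integral)
    qed
    then show "(\<integral>\<^sup>+w. ennreal (s2 w) \<partial>M) < \<infinity>" using fin2 by simp
  qed simp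
  have intB: "integrable M (\<lambda>w. 1 + s1 w + s2 w)" using ints1 ints2 by simp
  have absle: "\<bar>m\<bar> \<le> 1 + m\<^sup>2" for m :: real
  proof -
    have "0 \<le> (\<bar>m\<bar> - 1)\<^sup>2" by simp
    then have "2 * \<bar>m\<bar> \<le> 1 + m\<^sup>2" by (simp add: power2_eq_square algebra_simps)
    then show ?thesis by simp
  qed
  have prodle: "\<bar>x * y\<bar> \<le> x\<^sup>2 + y\<^sup>2" for x y :: real
  proof -
    have "0 \<le> (\<bar>x\<bar> - \<bar>y\<bar>)\<^sup>2" by simp
    then have "2 * (\<bar>x\<bar> * \<bar>y\<bar>) \<le> x\<^sup>2 + y\<^sup>2" by (simp add: power2_eq_square algebra_simps)
    then show ?thesis using mult_nonneg_nonneg[OF abs_ge_zero abs_ge_zero, of x y] unfolding abs_mult by linarith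
  qed
  have nB: "norm (1 + s1 w + s2 w) = 1 + s1 w + s2 w" for w using s1nn[of w] s2nn[of w] by simp
  have intm1: "integrable M m1"
  proof (rule Bochner_Integration.integrable_bound[OF intB])
    show "AE w in M. norm (m1 w) \<le> norm (1 + s1 w + s2 w)" using AEbd1
    proof eventually_elim
      case (elim w) then show ?case using absle[of "m1 w"] s2nn[of w] unfolding nB by simp
    qed
  qed simp
  have intm2: "integrable M m2"
  proof (rule Bochner_Integration.integrable_bound[OF intB])
    show "AE w in M. norm (m2 w) \<le> norm (1 + s1 w + s2 w)" using AEbd2
    proof eventually_elim
      case (elim w) then show ?case using absle[of "m2 w"] s1nn[of w] unfolding nB by simp
    qed
  qed simp
  have intm1sq: "integrable M (\<lambda>w. (m1 w)\<^sup>2)"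
  proof (rule Bochner_Integration.integrable_bound[OF intB])
    show "AE w in M. norm ((m1 w)\<^sup>2) \<le> norm (1 + s1 w + s2 w)" using AEbd1
    proof eventually_elim
      case (elim w) then show ?case using s2nn[of w] unfolding nB by simp
    qed
  qed simp
  have intm2sq: "integrable M (\<lambda>w. (m2 w)\<^sup>2)"
  proof (rule Bochner_Integration.integrable_bound[OF intB])
    show "AE w in M. norm ((m2 w)\<^sup>2) \<le> norm (1 + s1 w + s2 w)" using AEbd2
    proof eventually_elim
      case (elim w) then show ?case using s1nn[of w] unfolding nB by simp
    qed
  qed simp
  have intm12: "integrable M (\<lambda>w. m1 w * m2 w)"
  proof (rule Bochner_Integration.integrable_bound[OF intB])
    show "AE w in M. norm (m1 w * m2 w) \<le> norm (1 + s1 w + s2 w)" using AEbd1 AEbd2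
    proof eventually_elim
      case (elim w) then show ?case using prodle[of "m1 w" "m2 w"] unfolding nB by simp
    qed
  qed simp
  define A where "A = (\<integral>w. m1 w \<partial>M)"
  define S where "S = (\<integral>w. s1 w \<partial>M)"
  define B where "B = (\<integral>w. (m1 w)\<^sup>2 \<partial>M)"
  define C where "C = (\<integral>w. m1 w * m2 w \<partial>M)"
  have A2: "(\<integral>w. m2 w \<partial>M) = A" unfolding A_def m1_def m2_def using trl[OF mm(1)] by simp
  have S2: "(\<integral>w. s2 w \<partial>M) = S" unfolding S_def s1_def s2_def using trl[OF mm(2)] by simp
  have B2: "(\<integral>w. (m2 w)\<^sup>2 \<partial>M) = B" unfolding B_def m1_def m2_def
    using trl[of "\<lambda>p. (\<integral>x. x \<partial>p)\<^sup>2"] mm(1) by simp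
  have G: "integrable M (\<lambda>w. (a * X i0 w + b * X i0' w + c * Y j0 w + d)\<^sup>2) \<and>
      (\<integral>w. (a * X i0 w + b * X i0' w + c * Y j0 w + d)\<^sup>2 \<partial>M)
        = (a\<^sup>2 + b\<^sup>2) * S + c\<^sup>2 * S + d\<^sup>2 + (2*a*b) * B + (2*a*c + 2*b*c) * C + (2*a*d + 2*b*d) * A + (2*c*d) * A"
    if idx: "1 \<le> i0" "1 \<le> i0'" "i0 \<noteq> i0'" "1 \<le> j0" for i0 i0' j0 a b c d
  proof -
    define P where "P w = poly a b c d (m1 w) (s1 w) (m2 w) (s2 w)" for w
    define sq where "sq w = (a * X i0 w + b * X i0' w + c * Y j0 w + d)\<^sup>2" for w
    have Peq: "P = (\<lambda>w. (a\<^sup>2 + b\<^sup>2) * s1 w + c\<^sup>2 * s2 w + d\<^sup>2 + (2*a*b) * (m1 w)\<^sup>2 + (2*a*c + 2*b*c) * (m1 w * m2 w)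
         + (2*a*d + 2*b*d) * m1 w + (2*c*d) * m2 w)"
      by (rule ext) (simp add: P_def poly_def algebra_simps power2_eq_square)
    have Pint: "integrable M P" unfolding Peq
      using ints1 ints2 intm1 intm2 intm1sq intm12 by (intro Bochner_Integration.integrable_add) auto
    have PI: "(\<integral>w. P w \<partial>M) = (a\<^sup>2 + b\<^sup>2) * S + c\<^sup>2 * S + d\<^sup>2 + (2*a*b) * B + (2*a*c + 2*b*c) * C + (2*a*d + 2*b*d) * A + (2*c*d) * A"
      unfolding Peq using ints1 ints2 intm1 intm2 intm1sq intm12
      by (simp add: Bochner_Integration.integral_add integral_mult_right_zero A2 S2 M.prob_space flip: A_def S_def B_def C_def)
    have Pnn: "AE w in M. 0 \<le> P w" using AEbd1 AEbd2
      by eventually_elim (simp add: P_def poly_nonneg)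
    have "(\<integral>\<^sup>+w. ennreal (sq w) \<partial>M) = (\<integral>\<^sup>+w. \<integral>\<^sup>+x. \<integral>\<^sup>+x'. \<integral>\<^sup>+y. ennreal ((a * x + b * x' + c * y + d)\<^sup>2) \<partial>P2 w \<partial>P1 w \<partial>P1 w \<partial>M)"
      unfolding sq_def by (rule core'[OF idx])
    also have "\<dots> = (\<integral>\<^sup>+w. ennreal (P w) \<partial>M)"
    proof (rule nn_integral_cong_AE)
      show "AE w in M. (\<integral>\<^sup>+x. \<integral>\<^sup>+x'. \<integral>\<^sup>+y. ennreal ((a * x + b * x' + c * y + d)\<^sup>2) \<partial>P2 w \<partial>P1 w \<partial>P1 w) = ennreal (P w)"
        using AEint1 AEint2 AE_space
      proof eventually_elim
        case (elim w)
        show ?case unfolding P_def m1_def s1_def m2_def s2_def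
          by (rule T) (use elim Pw[OF elim(3)] in auto)
      qed
    qed
    also have "\<dots> = ennreal (\<integral>w. P w \<partial>M)"
      by (rule nn_integral_eq_integral[OF Pint Pnn])
    finally have nneq: "(\<integral>\<^sup>+w. ennreal (sq w) \<partial>M) = ennreal (\<integral>w. P w \<partial>M)" .
    have AEsq: "AE w in M. 0 \<le> sq w" by (simp add: sq_def)
    have sqint: "integrable M sq"
    proof (rule integrableI_nonneg)
      show "sq \<in> borel_measurable M" unfolding sq_def[abs_def] by measurable
    qed (auto simp: sq_def nneq[unfolded sq_def])
    have "ennreal (\<integral>w. sq w \<partial>M) = ennreal (\<integral>w. P w \<partial>M)"
      using nn_integral_eq_integral[OF sqint AEsq] nneq by simp
    then have "(\<integral>w. sq w \<partial>M) = (\<integral>w. P w \<partial>M)"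
      using integral_nonneg_AE[OF Pnn] integral_nonneg_AE[OF AEsq] by (subst (asm) ennreal_inj) auto
    then show ?thesis using sqint PI unfolding sq_def[abs_def] by simp
  qed
  have Gx: "integrable M f \<and> integral\<^sup>L M f = r"
    if idx: "1 \<le> i0" "1 \<le> i0'" "i0 \<noteq> i0'" "1 \<le> j0"
      and f: "f = (\<lambda>w. (a * X i0 w + b * X i0' w + c * Y j0 w + d)\<^sup>2)"
      and r: "r = (a\<^sup>2 + b\<^sup>2) * S + c\<^sup>2 * S + d\<^sup>2 + (2*a*b) * B + (2*a*c + 2*b*c) * C + (2*a*d + 2*b*d) * A + (2*c*d) * A"
    for f r i0 i0' j0 a b c d
    using G[OF idx, of a b c d] f r by simp
  have EX: "(\<integral>w. X k w \<partial>M) = A" "var M (X k) = S - A\<^sup>2" "integrable M (\<lambda>w. (X k w - A)\<^sup>2)" if k: "1 \<le> k" for k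
  proof -
    have k': "1 \<le> k + 1" "k \<noteq> k + 1" "1 \<le> (1::nat)" using k by auto
    have g0: "integrable M (\<lambda>w. (X k w)\<^sup>2) \<and> (\<integral>w. (X k w)\<^sup>2 \<partial>M) = S"
      by (rule Gx[OF k k', of _ 1 0 0 0]) (auto simp: fun_eq_iff)
    have g1: "integrable M (\<lambda>w. (X k w + 1)\<^sup>2) \<and> (\<integral>w. (X k w + 1)\<^sup>2 \<partial>M) = S + 1 + 2 * A"
      by (rule Gx[OF k k', of _ 1 0 0 1]) (auto simp: fun_eq_iff)
    have intX: "integrable M (X k)"
      by (rule M.square_integrable_imp_integrable) (use g0 in auto)
    have "(\<integral>w. (X k w + 1)\<^sup>2 \<partial>M) = (\<integral>w. (X k w)\<^sup>2 + 2 * X k w + 1 \<partial>M)"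
      by (rule Bochner_Integration.integral_cong) (auto simp: power2_eq_square algebra_simps)
    also have "\<dots> = (\<integral>w. (X k w)\<^sup>2 \<partial>M) + 2 * (\<integral>w. X k w \<partial>M) + 1"
      using g0 intX by (simp add: Bochner_Integration.integral_add M.prob_space)
    finally show EXk: "(\<integral>w. X k w \<partial>M) = A" using g0 g1 by simp
    have g2: "integrable M (\<lambda>w. (X k w - A)\<^sup>2) \<and> (\<integral>w. (X k w - A)\<^sup>2 \<partial>M) = S - A\<^sup>2"
      by (rule Gx[OF k k', of _ 1 0 0 "-A"]) (auto simp: fun_eq_iff power2_eq_square algebra_simps)
    then show "var M (X k) = S - A\<^sup>2" "integrable M (\<lambda>w. (X k w - A)\<^sup>2)"
      by (auto simp: var_def EXk)
  qed
  have EY: "(\<integral>w. Y j w \<partial>M) = A" "var M (Y j) = S - A\<^sup>2" "integrable M (\<lambda>w. (Y j w - A)\<^sup>2)"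
  proof -
    have k': "1 \<le> (1::nat)" "1 \<le> (2::nat)" "(1::nat) \<noteq> 2" "1 \<le> j" using \<open>j \<ge> 1\<close> by auto
    have g0: "integrable M (\<lambda>w. (Y j w)\<^sup>2) \<and> (\<integral>w. (Y j w)\<^sup>2 \<partial>M) = S"
      by (rule Gx[OF k', of _ 0 0 1 0]) (auto simp: fun_eq_iff)
    have g1: "integrable M (\<lambda>w. (Y j w + 1)\<^sup>2) \<and> (\<integral>w. (Y j w + 1)\<^sup>2 \<partial>M) = S + 1 + 2 * A"
      by (rule Gx[OF k', of _ 0 0 1 1]) (auto simp: fun_eq_iff)
    have intY: "integrable M (Y j)"
      by (rule M.square_integrable_imp_integrable) (use g0 in auto)
    have "(\<integral>w. (Y j w + 1)\<^sup>2 \<partial>M) = (\<integral>w. (Y j w)\<^sup>2 + 2 * Y j w + 1 \<partial>M)"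
      by (rule Bochner_Integration.integral_cong) (auto simp: power2_eq_square algebra_simps)
    also have "\<dots> = (\<integral>w. (Y j w)\<^sup>2 \<partial>M) + 2 * (\<integral>w. Y j w \<partial>M) + 1"
      using g0 intY by (simp add: Bochner_Integration.integral_add M.prob_space)
    finally show EYk: "(\<integral>w. Y j w \<partial>M) = A" using g0 g1 by simp
    have g2: "integrable M (\<lambda>w. (Y j w - A)\<^sup>2) \<and> (\<integral>w. (Y j w - A)\<^sup>2 \<partial>M) = S - A\<^sup>2"
      by (rule Gx[OF k', of _ 0 0 1 "-A"]) (auto simp: fun_eq_iff power2_eq_square algebra_simps)
    then show "var M (Y j) = S - A\<^sup>2" "integrable M (\<lambda>w. (Y j w - A)\<^sup>2)"
      by (auto simp: var_def EYk)
  qed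
  have polar: "(\<integral>w. (U w - A) * (W w - A) \<partial>M) = ((\<integral>w. (U w + W w - 2 * A)\<^sup>2 \<partial>M) - (\<integral>w. (U w - A)\<^sup>2 \<partial>M) - (\<integral>w. (W w - A)\<^sup>2 \<partial>M)) / 2"
    if "integrable M (\<lambda>w. (U w + W w - 2 * A)\<^sup>2)" "integrable M (\<lambda>w. (U w - A)\<^sup>2)" "integrable M (\<lambda>w. (W w - A)\<^sup>2)"
    for U W :: "'a \<Rightarrow> real"
  proof -
    have "(\<integral>w. (U w - A) * (W w - A) \<partial>M) = (\<integral>w. ((U w + W w - 2 * A)\<^sup>2 - (U w - A)\<^sup>2 - (W w - A)\<^sup>2) / 2 \<partial>M)"
      by (rule Bochner_Integration.integral_cong) (auto simp: power2_eq_square algebra_simps)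
    also have "\<dots> = ((\<integral>w. (U w + W w - 2 * A)\<^sup>2 \<partial>M) - (\<integral>w. (U w - A)\<^sup>2 \<partial>M) - (\<integral>w. (W w - A)\<^sup>2 \<partial>M)) / 2"
      using that by (simp add: Bochner_Integration.integral_diff integral_divide_zero)
    finally show ?thesis .
  qed
  have iI: "1 \<le> i" "1 \<le> i'" "i \<noteq> i'" "1 \<le> j" using assms(10-13) by auto
  have F1: "integrable M (\<lambda>w. (X i w + X i' w - 2 * A)\<^sup>2) \<and> (\<integral>w. (X i w + X i' w - 2 * A)\<^sup>2 \<partial>M) = 2 * S + 2 * B - 4 * A\<^sup>2"
    by (rule Gx[OF iI, of _ 1 1 0 "-2*A"]) (auto simp: fun_eq_iff power2_eq_square algebra_simps)
  have F2: "integrable M (\<lambda>w. (X i w + Y j w - 2 * A)\<^sup>2) \<and> (\<integral>w. (X i w + Y j w - 2 * A)\<^sup>2 \<partial>M) = 2 * S + 2 * C - 4 * A\<^sup>2"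
    by (rule Gx[OF iI, of _ 1 0 1 "-2*A"]) (auto simp: fun_eq_iff power2_eq_square algebra_simps)
  have vX: "(\<integral>w. (X k w - A)\<^sup>2 \<partial>M) = S - A\<^sup>2" if "1 \<le> k" for k
    using EX[OF that] by (simp add: var_def)
  have vY: "(\<integral>w. (Y j w - A)\<^sup>2 \<partial>M) = S - A\<^sup>2"
    using EY by (simp add: var_def)
  have covXX: "covariance M (X i) (X i') = B - A\<^sup>2"
  proof -
    have "covariance M (X i) (X i') = (\<integral>w. (X i w - A) * (X i' w - A) \<partial>M)"
      unfolding covariance_def EX(1)[OF iI(1)] EX(1)[OF iI(2)] ..
    also have "\<dots> = ((2 * S + 2 * B - 4 * A\<^sup>2) - (S - A\<^sup>2) - (S - A\<^sup>2)) / 2"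
      unfolding polar[OF conjunct1[OF F1] EX(3)[OF iI(1)] EX(3)[OF iI(2)]] conjunct2[OF F1] vX[OF iI(1)] vX[OF iI(2)] ..
    also have "\<dots> = B - A\<^sup>2" by (simp add: field_simps)
    finally show ?thesis .
  qed
  have covXY: "covariance M (X i) (Y j) = C - A\<^sup>2"
  proof -
    have "covariance M (X i) (Y j) = (\<integral>w. (X i w - A) * (Y j w - A) \<partial>M)"
      unfolding covariance_def EX(1)[OF iI(1)] EY(1) ..
    also have "\<dots> = ((2 * S + 2 * C - 4 * A\<^sup>2) - (S - A\<^sup>2) - (S - A\<^sup>2)) / 2"
      unfolding polar[OF conjunct1[OF F2] EX(3)[OF iI(1)] EY(3)] conjunct2[OF F2] vX[OF iI(1)] vY ..
    also have "\<dots> = C - A\<^sup>2" by (simp add: field_simps)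
    finally show ?thesis .
  qed
  have V: "S - A\<^sup>2 > 0" using pos_var EX(2)[of 1] by simp
  have corrXX: "corr M (X i) (X i') = (B - A\<^sup>2) / (S - A\<^sup>2)"
    unfolding corr_def covXX EX(2)[OF iI(1)] EX(2)[OF iI(2)] using V by simp
  have corrXY: "corr M (X i) (Y j) = (C - A\<^sup>2) / (S - A\<^sup>2)"
    unfolding corr_def covXY EX(2)[OF iI(1)] EY(2) using V by simp
  have CS1: "0 \<le> B - C"
  proof -
    have "0 \<le> (\<integral>w. (m1 w - m2 w)\<^sup>2 \<partial>M)" by simp
    also have "(\<integral>w. (m1 w - m2 w)\<^sup>2 \<partial>M) = (\<integral>w. (m1 w)\<^sup>2 - 2 * (m1 w * m2 w) + (m2 w)\<^sup>2 \<partial>M)"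
      by (rule Bochner_Integration.integral_cong) (auto simp: power2_eq_square algebra_simps)
    also have "\<dots> = B - 2 * C + B"
      using intm1sq intm2sq intm12 B2
      by (simp add: Bochner_Integration.integral_add Bochner_Integration.integral_diff flip: B_def C_def)
    finally show ?thesis by simp
  qed
  have CS2: "0 \<le> 2 * B + 2 * C - 4 * A\<^sup>2"
  proof -
    have "0 \<le> (\<integral>w. (m1 w + m2 w - 2 * A)\<^sup>2 \<partial>M)" by simp
    also have "(\<integral>w. (m1 w + m2 w - 2 * A)\<^sup>2 \<partial>M) = (\<integral>w. (m1 w)\<^sup>2 + 2 * (m1 w * m2 w) + (m2 w)\<^sup>2 - 4 * A * m1 w - 4 * A * m2 w + 4 * A\<^sup>2 \<partial>M)"
      by (rule Bochner_Integration.integral_cong) (auto simp: power2_eq_square algebra_simps)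
    also have "\<dots> = B + 2 * C + B - 4 * A * A - 4 * A * A + 4 * A\<^sup>2"
      using intm1sq intm2sq intm12 intm1 intm2 B2 A2
      by (simp add: Bochner_Integration.integral_add Bochner_Integration.integral_diff M.prob_space flip: A_def B_def C_def)
    finally show ?thesis by (simp add: power2_eq_square)
  qed
  have "- (B - A\<^sup>2) \<le> C - A\<^sup>2" "C - A\<^sup>2 \<le> B - A\<^sup>2" using CS1 CS2 by auto
  then have "- (B - A\<^sup>2) / (S - A\<^sup>2) \<le> (C - A\<^sup>2) / (S - A\<^sup>2)" "(C - A\<^sup>2) / (S - A\<^sup>2) \<le> (B - A\<^sup>2) / (S - A\<^sup>2)"
    using V by (auto intro!: divide_right_mono)
  then show ?thesis unfolding corrXX corrXY by (simp add: minus_divide_left)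
qed

end
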